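(* Let $\varepsilon\in(0,1]$, $L\in[0,\infty)$, $q\in(1,\infty)$, $\alpha\in[0,\infty)\setminus\{1\}$, let $f\colon\mathbb R\to\mathbb R$ satisfy $|f(x)-f(y)|\le L|x-y|$ for all $x,y\in\mathbb R$, and let $a\in C(\mathbb R,\mathbb R)$ satisfy $a(x)=\max\{x,\alpha x\}$ for all $x\in\mathbb R$. Then there exists $\mathbf G\in\mathbf N$ such that (i) $\mathcal R_a(\mathbf G)\in C(\mathbb R,\mathbb R)$; (ii) $\mathcal H(\mathbf G)=1$; (iii) $|(\mathcal R_a(\mathbf G))(x)-(\mathcal R_a(\mathbf G))(y)|\le L|x-y|$ for all $x,y\in\mathbb R$; (iv) $|(\mathcal R_a(\mathbf G))(x)-f(x)|\le\varepsilon\max\{1,|x|^q\}$ for all $x\in\mathbb R$; (v) $\mathbb D_1(\mathbf G)\le4(\max\{1,2L\})^{q/(q-1)}\varepsilon^{-q/(q-1)}+2$; and (vi) $\mathcal P(\mathbf G)=3\mathbb D_1(\mathbf G)+1\le24(\max\{1,2L\})^{q/(q-1)}\varepsilon^{-q/(q-1)}$.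
   Context: Artificial neural networks (ANNs). Let $\mathbb N=\{1,2,\dots\}$ and $\mathbf N=\bigcup_{L\in\mathbb N}\bigcup_{l_0,\dots,l_L\in\mathbb N}\prod_{k=1}^L(\mathbb R^{l_k\times l_{k-1}}\times\mathbb R^{l_k})$. For $\Phi=((W_1,B_1),\dots,(W_L,B_L))$ in the $(l_0,\dots,l_L)$ component, $\mathcal P(\Phi)=\sum_{k=1}^Ll_k(l_{k-1}+1)$, $\mathcal H(\Phi)=L-1$, $\mathbb D_1(\Phi)=l_1$. For $a\in C(\mathbb R,\mathbb R)$ the realization $\mathcal R_a(\Phi)\colon\mathbb R^{l_0}\to\mathbb R^{l_L}$ is $(\mathcal R_a(\Phi))(x_0)=W_Lx_{L-1}+B_L$ with $x_k=\mathfrak M_{a,l_k}(W_kx_{k-1}+B_k)$, $k=1,\dots,L-1$, where $\mathfrak M_{a,m}$ applies $a$ componentwise. *)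

theory Defs
  imports "HOL-Analysis.Analysis"
begin

text \<open>An ANN is a nonempty list of layers (W_k, B_k); W_k is a list of l_k rows,
  each a list of length l_(k-1); B_k is a list of length l_k. All l_k are at least 1.\<close>

type_synonym layer = "real list list \<times> real list"

fun dims_ok :: "nat \<Rightarrow> layer list \<Rightarrow> bool" where
  "dims_ok n [] = True"
| "dims_ok n ((W, B) # \<Phi>) =
     (1 \<le> length W \<and> length B = length W \<and> (\<forall>r\<in>set W. length r = n)
      \<and> dims_ok (length W) \<Phi>)"

definition in_dim :: "layer list \<Rightarrow> nat" where
  "in_dim \<Phi> = length (hd (fst (hd \<Phi>)))"

definition out_dim :: "layer list \<Rightarrow> nat" where
  "out_dim \<Phi> = length (fst (last \<Phi>))"

definition is_ANN :: "layer list \<Rightarrow> bool" where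
  "is_ANN \<Phi> \<longleftrightarrow> \<Phi> \<noteq> [] \<and> 1 \<le> in_dim \<Phi> \<and> dims_ok (in_dim \<Phi>) \<Phi>"

definition ann_params :: "layer list \<Rightarrow> nat" where
  "ann_params \<Phi> = sum_list (map (\<lambda>(W, B). length W * (length (hd W) + 1)) \<Phi>)"

definition ann_hidden :: "layer list \<Rightarrow> nat" where
  "ann_hidden \<Phi> = length \<Phi> - 1"

definition ann_D1 :: "layer list \<Rightarrow> nat" where
  "ann_D1 \<Phi> = length (fst (hd \<Phi>))"

definition matvec :: "real list list \<Rightarrow> real list \<Rightarrow> real list" where
  "matvec W x = map (\<lambda>r. sum_list (map2 (*) r x)) W"

definition affine :: "layer \<Rightarrow> real list \<Rightarrow> real list" where
  "affine l x = map2 (+) (matvec (fst l) x) (snd l)"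

fun realize :: "(real \<Rightarrow> real) \<Rightarrow> layer list \<Rightarrow> real list \<Rightarrow> real list" where
  "realize a [] x = x"
| "realize a [l] x = affine l x"
| "realize a (l # l' # \<Phi>) x = realize a (l' # \<Phi>) (map a (affine l x))"

end

theory Submission
  imports Defs
begin

definition tt :: "real \<Rightarrow> real \<Rightarrow> nat \<Rightarrow> real" where
  "tt x0 h i = x0 + real i * h"
definition ss :: "(real \<Rightarrow> real) \<Rightarrow> real \<Rightarrow> real \<Rightarrow> nat \<Rightarrow> real" where
  "ss f x0 h i = (f (tt x0 h (Suc i)) - f (tt x0 h i)) / h"
definition cl :: "real \<Rightarrow> real \<Rightarrow> real \<Rightarrow> real" where
  "cl x u v = min (max x u) v"
definition Gs :: "(real \<Rightarrow> real) \<Rightarrow> real \<Rightarrow> real \<Rightarrow> nat \<Rightarrow> real \<Rightarrow> real" where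
  "Gs f x0 h N x = f x0 + (\<Sum>i<N. ss f x0 h i * (cl x (tt x0 h i) (tt x0 h (Suc i)) - tt x0 h i))"

lemma tt_Suc: "tt x0 h (Suc i) = tt x0 h i + h"
  by (simp add: tt_def algebra_simps)

lemma tt_mono: "0 \<le> h \<Longrightarrow> i \<le> j \<Longrightarrow> tt x0 h i \<le> tt x0 h j"
  by (simp add: tt_def mult_right_mono)

lemma Ga: "0 < h \<Longrightarrow> tt x0 h N \<le> x \<Longrightarrow> Gs f x0 h N x = f (tt x0 h N)"
proof (induction N)
  case 0 then show ?case by (simp add: Gs_def tt_def)
next
  case (Suc N)
  have "tt x0 h N \<le> x" using Suc.prems tt_Suc[of x0 h N] by simp
  then have IH: "Gs f x0 h N x = f (tt x0 h N)" using Suc by simp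
  have c: "cl x (tt x0 h N) (tt x0 h N + h) = tt x0 h N + h"
    using Suc.prems tt_Suc[of x0 h N] by (simp add: cl_def)
  have "Gs f x0 h (Suc N) x = Gs f x0 h N x + ss f x0 h N * h"
    by (simp add: Gs_def tt_Suc c)
  also have "\<dots> = f (tt x0 h (Suc N))" using IH Suc.prems by (simp add: ss_def)
  finally show ?case .
qed

lemma Gc: "0 < h \<Longrightarrow> x \<le> x0 \<Longrightarrow> Gs f x0 h N x = f x0"
proof -
  assume h: "0 < h" and x: "x \<le> x0"
  have "\<And>i. cl x (tt x0 h i) (tt x0 h (Suc i)) = tt x0 h i"
  proof -
    fix i
    have "x0 \<le> tt x0 h i" using h by (simp add: tt_def)
    then show "cl x (tt x0 h i) (tt x0 h (Suc i)) = tt x0 h i"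
      using h x by (simp add: cl_def tt_Suc min_def max_def)
  qed
  then show ?thesis by (simp add: Gs_def)
qed

lemma Gb:
  assumes h: "0 < h" and L: "0 \<le> L" and lip: "\<And>x y. \<bar>f x - f y\<bar> \<le> L * \<bar>x - y\<bar>"
  shows "\<bar>Gs f x0 h N x - f (cl x x0 (tt x0 h N))\<bar> \<le> 2 * L * h"
proof (induction N)
  case 0 then show ?case using h L by (simp add: Gs_def tt_def cl_def)
next
  case (Suc N)
  have le: "x0 \<le> tt x0 h N" using tt_mono[of h 0 N x0] h by (simp add: tt_def)
  show ?case
  proof (cases "x \<le> tt x0 h N")
    case True
    have c1: "cl x (tt x0 h N) (tt x0 h (Suc N)) = tt x0 h N"
      using True h by (simp add: cl_def tt_Suc)
    have c2: "cl x x0 (tt x0 h (Suc N)) = cl x x0 (tt x0 h N)"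
      using True h le by (simp add: cl_def tt_Suc)
    have "Gs f x0 h (Suc N) x = Gs f x0 h N x" by (simp add: Gs_def c1)
    then show ?thesis using Suc c2 by simp
  next
    case False
    define y where "y = min x (tt x0 h (Suc N))"
    have IH: "Gs f x0 h N x = f (tt x0 h N)" using Ga[of h x0 N x f] h False by simp
    have c1: "cl x (tt x0 h N) (tt x0 h (Suc N)) = y"
      using False h by (simp add: cl_def tt_Suc y_def)
    have c2: "cl x x0 (tt x0 h (Suc N)) = y"
      using False h le by (simp add: cl_def tt_Suc y_def)
    have y1: "tt x0 h N \<le> y" "y - tt x0 h N \<le> h" using False h by (auto simp: y_def tt_Suc)
    have sN: "\<bar>ss f x0 h N\<bar> \<le> L"
    proof -
      have "\<bar>f (tt x0 h (Suc N)) - f (tt x0 h N)\<bar> \<le> L * h"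
        using lip[of "tt x0 h (Suc N)" "tt x0 h N"] h by (simp add: tt_Suc)
      then show ?thesis using h by (simp add: ss_def abs_divide divide_le_eq)
    qed
    have Geq: "Gs f x0 h (Suc N) x = f (tt x0 h N) + ss f x0 h N * (y - tt x0 h N)"
      by (simp add: Gs_def c1 IH[unfolded Gs_def])
    have "\<bar>Gs f x0 h (Suc N) x - f (cl x x0 (tt x0 h (Suc N)))\<bar>
        \<le> \<bar>f (tt x0 h N) - f y\<bar> + \<bar>ss f x0 h N\<bar> * (y - tt x0 h N)"
    proof -
      have "\<bar>ss f x0 h N * (y - tt x0 h N)\<bar> = \<bar>ss f x0 h N\<bar> * (y - tt x0 h N)"
        using y1 by (simp add: abs_mult)
      moreover have "Gs f x0 h (Suc N) x - f (cl x x0 (tt x0 h (Suc N)))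
         = (f (tt x0 h N) - f y) + ss f x0 h N * (y - tt x0 h N)" using c2 Geq by simp
      ultimately show ?thesis using abs_triangle_ineq[of "f (tt x0 h N) - f y" "ss f x0 h N * (y - tt x0 h N)"] by linarith
    qed
    also have "\<dots> \<le> L * (y - tt x0 h N) + L * (y - tt x0 h N)"
      using lip[of "tt x0 h N" y] y1 sN by (intro add_mono mult_right_mono) auto
    also have "\<dots> \<le> 2 * L * h"
    proof -
      have "L * (y - tt x0 h N) \<le> L * h" using y1 L by (intro mult_left_mono) auto
      then show ?thesis by linarith
    qed
    finally show ?thesis .
  qed
qed

lemma tele:
  assumes h: "0 < h"
  shows "(\<Sum>i<N. cl z (tt x0 h i) (tt x0 h (Suc i)) - tt x0 h i) = cl z x0 (tt x0 h N) - x0"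
proof (induction N)
  case 0 then show ?case by (simp add: cl_def tt_def)
next
  case (Suc N)
  have le: "x0 \<le> tt x0 h N" using tt_mono[of h 0 N x0] h by (simp add: tt_def)
  have "cl z x0 (tt x0 h N) + cl z (tt x0 h N) (tt x0 h (Suc N)) - tt x0 h N
      = cl z x0 (tt x0 h (Suc N))"
    using le h unfolding cl_def tt_Suc by (simp add: min_def max_def)
  then show ?case using Suc by simp
qed

lemma cl_mono: "x \<le> y \<Longrightarrow> cl x u v \<le> cl y u v"
  by (simp add: cl_def)

lemma cl_lip: "x \<le> y \<Longrightarrow> cl y u v - cl x u v \<le> y - x"
  by (simp add: cl_def min_def max_def)

lemma Glip_le:
  assumes h: "0 < h" and L: "0 \<le> L" and lip: "\<And>x y. \<bar>f x - f y\<bar> \<le> L * \<bar>x - y\<bar>"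
    and xy: "x \<le> y"
  shows "\<bar>Gs f x0 h N y - Gs f x0 h N x\<bar> \<le> L * (y - x)"
proof -
  define c where "c z i = cl z (tt x0 h i) (tt x0 h (Suc i))" for z i
  define s where "s i = ss f x0 h i" for i
  define t where "t i = tt x0 h i" for i
  have sN: "\<bar>s i\<bar> \<le> L" for i
  proof -
    have "\<bar>f (tt x0 h (Suc i)) - f (tt x0 h i)\<bar> \<le> L * h"
      using lip[of "tt x0 h (Suc i)" "tt x0 h i"] h by (simp add: tt_Suc)
    then show ?thesis using h by (simp add: s_def ss_def abs_divide divide_le_eq)
  qed
  have mono: "c x i \<le> c y i" for i unfolding c_def by (rule cl_mono[OF xy])
  have G: "Gs f x0 h N z = f x0 + (\<Sum>i<N. s i * (c z i - t i))" for z
    by (simp add: Gs_def c_def s_def t_def)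
  have "Gs f x0 h N y - Gs f x0 h N x = (\<Sum>i<N. s i * (c y i - t i)) - (\<Sum>i<N. s i * (c x i - t i))"
    by (simp add: G)
  also have "\<dots> = (\<Sum>i<N. s i * (c y i - t i) - s i * (c x i - t i))"
    by (simp only: sum_subtractf)
  also have "\<dots> = (\<Sum>i<N. s i * (c y i - c x i))"
    by (rule sum.cong) (auto simp: right_diff_distrib)
  finally have e1: "Gs f x0 h N y - Gs f x0 h N x = (\<Sum>i<N. s i * (c y i - c x i))" .
  have "\<bar>\<Sum>i<N. s i * (c y i - c x i)\<bar> \<le> (\<Sum>i<N. \<bar>s i * (c y i - c x i)\<bar>)"
    by (rule sum_abs)
  also have "\<dots> \<le> (\<Sum>i<N. L * (c y i - c x i))"
  proof (rule sum_mono)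
    fix i
    have nn: "0 \<le> c y i - c x i" using mono[of i] by simp
    then have "\<bar>s i * (c y i - c x i)\<bar> = \<bar>s i\<bar> * (c y i - c x i)"
      by (simp add: abs_mult)
    also have "\<dots> \<le> L * (c y i - c x i)" using sN[of i] nn by (rule mult_right_mono)
    finally show "\<bar>s i * (c y i - c x i)\<bar> \<le> L * (c y i - c x i)" .
  qed
  also have "\<dots> = L * (\<Sum>i<N. c y i - c x i)" by (simp only: sum_distrib_left)
  also have "(\<Sum>i<N. c y i - c x i) = (\<Sum>i<N. c y i - t i) - (\<Sum>i<N. c x i - t i)"
  proof -
    have "(\<Sum>i<N. c y i - c x i) = (\<Sum>i<N. (c y i - t i) - (c x i - t i))" by simp
    then show ?thesis by (simp only: sum_subtractf)
  qed
  also have "(\<Sum>i<N. c y i - t i) = cl y x0 (tt x0 h N) - x0"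
    unfolding c_def t_def by (rule tele[OF h])
  also have "(\<Sum>i<N. c x i - t i) = cl x x0 (tt x0 h N) - x0"
    unfolding c_def t_def by (rule tele[OF h])
  also have "L * (cl y x0 (tt x0 h N) - x0 - (cl x x0 (tt x0 h N) - x0)) \<le> L * (y - x)"
    using cl_lip[OF xy, of x0 "tt x0 h N"] L by (intro mult_left_mono) auto
  finally show ?thesis using e1 by simp
qed



lemma real_net:
  "realize a [(map (\<lambda>j. [1]) [0..<n], map (\<lambda>j. - b j) [0..<n]), ([map v [0..<n]], [c])] [x]
   = [(\<Sum>j<n. v j * a (x - b j)) + c]"
proof -
  have m1: "matvec (map (\<lambda>j. [1]) [0..<n]) [x] = map (\<lambda>j. x) [0..<n]"
    by (simp add: matvec_def)
  have a1: "affine (map (\<lambda>j. [1]) [0..<n], map (\<lambda>j. - b j) [0..<n]) [x] = map (\<lambda>j. x - b j) [0..<n]"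
    by (simp add: affine_def m1 zip_map_map zip_same_conv_map)
  have "sum_list (map2 (*) (map v [0..<n]) (map a (map (\<lambda>j. x - b j) [0..<n])))
     = (\<Sum>j<n. v j * a (x - b j))"
    by (simp add: zip_map_map zip_same_conv_map sum_list_sum_nth atLeast0LessThan comp_def)
  moreover have "realize a [(map (\<lambda>j. [1]) [0..<n], map (\<lambda>j. - b j) [0..<n]), ([map v [0..<n]], [c])] [x]
     = affine ([map v [0..<n]], [c]) (map a (map (\<lambda>j. x - b j) [0..<n]))"
    by (simp only: realize.simps a1)
  ultimately show ?thesis by (simp add: affine_def matvec_def)
qed

lemma sum_pairs: "(\<Sum>j<2*N. F j) = (\<Sum>i<N. F (2*i) + F (2*i+1 :: nat)) " for F :: "nat \<Rightarrow> real"
  by (induction N) (simp_all add: sum.distrib)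

lemma relu_a:
  fixes \<alpha> z :: real and a :: "real \<Rightarrow> real"
  assumes "\<alpha> \<noteq> 1" "\<And>x. a x = max x (\<alpha> * x)"
  shows "a z = \<bar>1 - \<alpha>\<bar> * max z 0 + min 1 \<alpha> * z"
proof (cases "1 < \<alpha>")
  case True
  then have ab: "\<bar>1 - \<alpha>\<bar> = \<alpha> - 1" "min 1 \<alpha> = 1" by auto
  show ?thesis
  proof (cases "0 \<le> z")
    case True
    then have "z \<le> \<alpha> * z" using mult_right_mono[of 1 \<alpha> z] \<open>1 < \<alpha>\<close> by simp
    then show ?thesis using assms True ab by (simp add: algebra_simps)
  next
    case False
    then have "\<alpha> * z \<le> z" using mult_right_mono_neg[of 1 \<alpha> z] \<open>1 < \<alpha>\<close> by simp
    then show ?thesis using assms False ab by simp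
  qed
next
  case False
  then have al: "\<alpha> < 1" using assms(1) by simp
  then have ab: "\<bar>1 - \<alpha>\<bar> = 1 - \<alpha>" "min 1 \<alpha> = \<alpha>" by auto
  show ?thesis
  proof (cases "0 \<le> z")
    case True
    then have "\<alpha> * z \<le> z" using mult_right_mono[of \<alpha> 1 z] al by simp
    then show ?thesis using assms True ab by (simp add: algebra_simps)
  next
    case False
    then have "z \<le> \<alpha> * z" using mult_right_mono_neg[of \<alpha> 1 z] al by simp
    then show ?thesis using assms False ab by simp
  qed
qed


lemma pair_term:
  fixes \<alpha> :: real and a :: "real \<Rightarrow> real"
  assumes al: "\<alpha> \<noteq> 1" and aa: "\<And>x. a x = max x (\<alpha> * x)" and h: "0 < h"
  shows "s / \<bar>1 - \<alpha>\<bar> * a (x - T) + (- s / \<bar>1 - \<alpha>\<bar>) * a (x - (T + h))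
       = s * (cl x T (T + h) - T) + s * min 1 \<alpha> * h / \<bar>1 - \<alpha>\<bar>"
proof -
  define g where "g = \<bar>1 - \<alpha>\<bar>"
  define be where "be = min 1 \<alpha>"
  have g: "0 < g" using al by (simp add: g_def)
  have r: "max (x - T) 0 - max (x - (T + h)) 0 = cl x T (T + h) - T"
    using h by (simp add: cl_def max_def min_def)
  have "a (x - T) - a (x - (T + h)) = g * (max (x - T) 0 - max (x - (T + h)) 0) + be * h"
    using relu_a[OF al aa, of "x - T"] relu_a[OF al aa, of "x - (T + h)"]
    unfolding g_def[symmetric] be_def[symmetric] by (simp add: algebra_simps)
  also have "\<dots> = g * (cl x T (T + h) - T) + be * h" by (simp only: r)
  finally have eq: "a (x - T) - a (x - (T + h)) = g * (cl x T (T + h) - T) + be * h" .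
  have "s / g * a (x - T) + (- s / g) * a (x - (T + h)) = s / g * (a (x - T) - a (x - (T + h)))"
    by (simp add: algebra_simps)
  also have "\<dots> = s / g * (g * (cl x T (T + h) - T) + be * h)" by (simp only: eq)
  also have "\<dots> = s * (cl x T (T + h) - T) + s * be * h / g" using g by (simp add: field_simps)
  finally show ?thesis by (simp add: g_def be_def)
qed

lemma net_eq:
  fixes \<alpha> :: real and a :: "real \<Rightarrow> real"
  assumes al: "\<alpha> \<noteq> 1" and aa: "\<And>x. a x = max x (\<alpha> * x)" and h: "0 < h"
  shows "(\<Sum>j<2*N. ((if even j then 1 else -1) * ss f x0 h (j div 2) / \<bar>1 - \<alpha>\<bar>)
            * a (x - tt x0 h (j div 2 + j mod 2)))
         + (f x0 - (\<Sum>i<N. ss f x0 h i * min 1 \<alpha> * h / \<bar>1 - \<alpha>\<bar>)) = Gs f x0 h N x"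
proof -
  have "(\<Sum>j<2*N. ((if even j then 1 else -1) * ss f x0 h (j div 2) / \<bar>1 - \<alpha>\<bar>)
            * a (x - tt x0 h (j div 2 + j mod 2)))
      = (\<Sum>i<N. ss f x0 h i / \<bar>1 - \<alpha>\<bar> * a (x - tt x0 h i)
               + (- ss f x0 h i / \<bar>1 - \<alpha>\<bar>) * a (x - (tt x0 h i + h)))"
    by (simp add: sum_pairs tt_Suc[symmetric])
  also have "\<dots> = (\<Sum>i<N. ss f x0 h i * (cl x (tt x0 h i) (tt x0 h (Suc i)) - tt x0 h i)
        + ss f x0 h i * min 1 \<alpha> * h / \<bar>1 - \<alpha>\<bar>)"
  proof (rule sum.cong)
    fix i assume "i \<in> {..<N}"
    show "ss f x0 h i / \<bar>1 - \<alpha>\<bar> * a (x - tt x0 h i)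
               + (- ss f x0 h i / \<bar>1 - \<alpha>\<bar>) * a (x - (tt x0 h i + h))
       = ss f x0 h i * (cl x (tt x0 h i) (tt x0 h (Suc i)) - tt x0 h i)
        + ss f x0 h i * min 1 \<alpha> * h / \<bar>1 - \<alpha>\<bar>"
      unfolding tt_Suc by (rule pair_term[OF al aa h])
  qed simp
  finally show ?thesis by (simp add: sum.distrib Gs_def)
qed

lemma powr_key:
  fixes K e q x R :: real
  assumes K: "0 < K" and e: "0 < e" and q: "1 < q" and R: "R = (K / e) powr (1 / (q - 1))"
    and x: "R \<le> \<bar>x\<bar>"
  shows "K * \<bar>x\<bar> \<le> e * \<bar>x\<bar> powr q"
proof -
  have R0: "0 < R" using R K e by simp
  have "R powr (q - 1) = K / e" using R K e q by (simp add: powr_powr)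
  moreover have "R powr (q - 1) \<le> \<bar>x\<bar> powr (q - 1)" using x R0 q by (intro powr_mono2) auto
  ultimately have k: "K \<le> e * \<bar>x\<bar> powr (q - 1)" using e by (simp add: divide_le_eq mult.commute)
  have x0: "0 < \<bar>x\<bar>" using R0 x by simp
  have "\<bar>x\<bar> powr (q - 1) * \<bar>x\<bar> = \<bar>x\<bar> powr (q - 1) * \<bar>x\<bar> powr 1" using x0 by simp
  also have "\<dots> = \<bar>x\<bar> powr q" by (subst powr_add[symmetric]) simp
  finally have xp: "\<bar>x\<bar> powr q = \<bar>x\<bar> powr (q - 1) * \<bar>x\<bar>" by simp
  have "K * \<bar>x\<bar> \<le> e * \<bar>x\<bar> powr (q - 1) * \<bar>x\<bar>" using k by (simp add: mult_right_mono)
  then show ?thesis by (simp add: xp mult.assoc)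
qed

theorem mainTheorem17:
  fixes \<epsilon> L q \<alpha> :: real and f a :: "real \<Rightarrow> real"
  assumes "0 < \<epsilon>" "\<epsilon> \<le> 1" "0 \<le> L" "1 < q" "0 \<le> \<alpha>" "\<alpha> \<noteq> 1"
    and "\<And>x y. \<bar>f x - f y\<bar> \<le> L * \<bar>x - y\<bar>"
    and "continuous_on UNIV a"
    and "\<And>x. a x = max x (\<alpha> * x)"
  shows "\<exists>G. is_ANN G \<and> in_dim G = 1 \<and> out_dim G = 1
     \<and> continuous_on UNIV (\<lambda>x. hd (realize a G [x]))
     \<and> ann_hidden G = 1
     \<and> (\<forall>x y. \<bar>hd (realize a G [x]) - hd (realize a G [y])\<bar> \<le> L * \<bar>x - y\<bar>)
     \<and> (\<forall>x. \<bar>hd (realize a G [x]) - f x\<bar> \<le> \<epsilon> * max 1 (\<bar>x\<bar> powr q))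
     \<and> real (ann_D1 G) \<le> 4 * (max 1 (2 * L)) powr (q / (q - 1)) * \<epsilon> powr (- q / (q - 1)) + 2
     \<and> ann_params G = 3 * ann_D1 G + 1
     \<and> real (ann_params G) \<le> 24 * (max 1 (2 * L)) powr (q / (q - 1)) * \<epsilon> powr (- q / (q - 1))"
proof -
  note e0 = assms(1) and e1 = assms(2) and L0 = assms(3) and q1 = assms(4)
  note al = assms(6) and lip = assms(7) and aa = assms(9)
  define M where "M = max 1 (2 * L)"
  define K where "K = M / 2"
  have K0: "0 < K" and LK: "L \<le> K" and M1: "1 \<le> M" by (auto simp: K_def M_def)
  define R where "R = (K / \<epsilon>) powr (1 / (q - 1))"
  have R0: "0 < R" using K0 e0 by (simp add: R_def)
  define h0 where "h0 = \<epsilon> / (2 * K)"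
  have h00: "0 < h0" using e0 K0 by (simp add: h0_def)
  define y where "y = 2 * R / h0"
  have y0: "0 < y" using R0 h00 by (simp add: y_def)
  define N where "N = nat \<lceil>y\<rceil>"
  have Ny: "y \<le> real N" "real N \<le> y + 1"
    using y0 of_int_ceiling_le_add_one[of y] by (auto simp: N_def)
  have N1: "1 \<le> N" using Ny y0 by linarith
  define h where "h = 2 * R / real N"
  have h0': "0 < h" using R0 N1 by (simp add: h_def)
  have hh0: "h \<le> h0"
  proof -
    have "2 * R \<le> h0 * real N" using Ny(1) h00 by (simp add: y_def divide_le_eq mult.commute)
    then show ?thesis using N1 by (simp add: h_def divide_le_eq mult.commute)
  qed
  define x0 where "x0 = - R"
  have tN: "tt x0 h N = R" using N1 by (simp add: tt_def x0_def h_def)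
  define g where "g = \<bar>1 - \<alpha>\<bar>"
  define v where "v j = ((if even j then 1 else -1) * ss f x0 h (j div 2) / g)" for j
  define b where "b j = tt x0 h (j div 2 + j mod 2)" for j
  define c where "c = f x0 - (\<Sum>i<N. ss f x0 h i * min 1 \<alpha> * h / g)"
  define G where "G = [(map (\<lambda>j. [1::real]) [0..<2*N], map (\<lambda>j. - b j) [0..<2*N]), ([map v [0..<2*N]], [c])]"
  have net: "hd (realize a G [x]) = Gs f x0 h N x" for x
  proof -
    have "hd (realize a G [x]) = (\<Sum>j<2*N. v j * a (x - b j)) + c"
      unfolding G_def real_net by simp
    also have "\<dots> = Gs f x0 h N x"
      unfolding v_def b_def c_def g_def by (rule net_eq[OF al aa h0'])
    finally show ?thesis .
  qed
  have up: "[0..<2*N] = 0 # [1..<2*N]" using N1 by (simp add: upt_conv_Cons)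
  have ann: "is_ANN G" "in_dim G = 1" "out_dim G = 1" "ann_hidden G = 1"
      "ann_D1 G = 2 * N" "ann_params G = 3 * ann_D1 G + 1"
    using N1 by (simp_all add: G_def is_ANN_def in_dim_def out_dim_def ann_hidden_def ann_D1_def
        ann_params_def up)
  have glip: "\<bar>Gs f x0 h N x - Gs f x0 h N y\<bar> \<le> L * \<bar>x - y\<bar>" for x y
  proof (cases "x \<le> y")
    case True then show ?thesis using Glip_le[OF h0' L0 lip True, of x0 N] by (simp add: abs_minus_commute)
  next
    case False then show ?thesis using Glip_le[OF h0' L0 lip, of y x x0 N] by simp
  qed
  have cont: "continuous_on UNIV (Gs f x0 h N)"
  proof (rule lipschitz_on_continuous_on)
    show "L-lipschitz_on UNIV (Gs f x0 h N)"
      using glip L0 by (simp add: lipschitz_on_def dist_real_def)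
  qed
  have err: "\<bar>Gs f x0 h N x - f x\<bar> \<le> \<epsilon> * max 1 (\<bar>x\<bar> powr q)" for x
  proof -
    have mx: "\<epsilon> * \<bar>x\<bar> powr q \<le> \<epsilon> * max 1 (\<bar>x\<bar> powr q)" "\<epsilon> \<le> \<epsilon> * max 1 (\<bar>x\<bar> powr q)"
      using e0 by (auto intro: mult_left_mono)
    show ?thesis
    proof (cases "x \<le> x0")
      case True
      then have "Gs f x0 h N x = f x0" using Gc[OF h0'] by simp
      moreover have "\<bar>f x0 - f x\<bar> \<le> L * \<bar>x0 - x\<bar>" by (rule lip)
      moreover have "L * \<bar>x0 - x\<bar> \<le> K * \<bar>x\<bar>"
        using True R0 LK L0 by (intro mult_mono) (auto simp: x0_def)
      moreover have "K * \<bar>x\<bar> \<le> \<epsilon> * \<bar>x\<bar> powr q"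
        using powr_key[OF K0 e0 q1 R_def] True by (simp add: x0_def)
      ultimately show ?thesis using mx by linarith
    next
      case False
      show ?thesis
      proof (cases "R \<le> x")
        case True
        then have "Gs f x0 h N x = f R" using Ga[OF h0', of x0 N x f] tN by simp
        moreover have "\<bar>f R - f x\<bar> \<le> L * \<bar>R - x\<bar>" by (rule lip)
        moreover have "L * \<bar>R - x\<bar> \<le> K * \<bar>x\<bar>"
          using True R0 LK L0 by (auto intro!: mult_mono)
        moreover have "K * \<bar>x\<bar> \<le> \<epsilon> * \<bar>x\<bar> powr q"
          using powr_key[OF K0 e0 q1 R_def] True by simp
        ultimately show ?thesis using mx by linarith
      next
        case F2: False
        have "cl x x0 (tt x0 h N) = x" using False F2 tN by (simp add: cl_def)
        then have "\<bar>Gs f x0 h N x - f x\<bar> \<le> 2 * L * h" using Gb[OF h0' L0 lip, of x0 N x] by simp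
        also have "\<dots> \<le> 2 * K * h0" using LK hh0 L0 h0' by (intro mult_mono) auto
        also have "\<dots> = \<epsilon>" using K0 by (simp add: h0_def)
        finally show ?thesis using mx by linarith
      qed
    qed
  qed
  define p where "p = q / (q - 1)"
  have p1: "1 \<le> p" using q1 by (simp add: p_def)
  define P where "P = (K / \<epsilon>) powr p"
  have yP: "y = 4 * P"
  proof -
    have "R * (K / \<epsilon>) = (K / \<epsilon>) powr (1 / (q - 1) + 1)"
      using K0 e0 by (simp add: R_def powr_add)
    also have "1 / (q - 1) + 1 = p" using q1 by (simp add: p_def field_simps)
    finally have "R * (K / \<epsilon>) = P" by (simp add: P_def)
    then show ?thesis using K0 e0 by (simp add: y_def h0_def field_simps)
  qed
  define Q where "Q = M powr p * \<epsilon> powr (- q / (q - 1))"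
  have QP: "Q = 2 powr p * P"
  proof -
    have "- q / (q - 1) = - p" by (simp add: p_def)
    then have "Q = M powr p / \<epsilon> powr p" by (simp add: Q_def powr_minus divide_inverse)
    also have "\<dots> = (M / \<epsilon>) powr p" using M1 e0 by (simp add: powr_divide)
    also have "M / \<epsilon> = 2 * (K / \<epsilon>)" by (simp add: K_def)
    also have "(2 * (K / \<epsilon>)) powr p = 2 powr p * P" using K0 e0 unfolding P_def by (subst powr_mult) auto
    finally show ?thesis .
  qed
  have Q1: "1 \<le> Q"
  proof -
    have "- q / (q - 1) = - p" by (simp add: p_def)
    then have "Q = M powr p / \<epsilon> powr p" by (simp add: Q_def powr_minus divide_inverse)
    also have "\<dots> = (M / \<epsilon>) powr p" using M1 e0 by (simp add: powr_divide)
    finally have "Q = (M / \<epsilon>) powr p" .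
    moreover have "1 \<le> M / \<epsilon>" using M1 e0 e1 by (simp add: le_divide_eq)
    ultimately show ?thesis using p1 by (simp add: ge_one_powr_ge_zero)
  qed
  have twop: "2 \<le> 2 powr p" using p1 powr_mono[of 1 p 2] by simp
  have P0: "0 \<le> P" by (simp add: P_def)
  have QP2: "2 * P \<le> Q" using QP twop P0 by (simp add: mult_right_mono)
  have D: "real (2 * N) \<le> 4 * Q + 2" using Ny(2) yP QP2 by simp
  have Pa: "real (3 * (2 * N) + 1) \<le> 24 * Q" using Ny(2) yP QP2 Q1 by simp
  have Qe: "max 1 (2 * L) powr (q / (q - 1)) * \<epsilon> powr (- q / (q - 1)) = Q"
    by (simp add: Q_def p_def M_def)
  have D': "real (ann_D1 G) \<le> 4 * max 1 (2 * L) powr (q / (q - 1)) * \<epsilon> powr (- q / (q - 1)) + 2"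
    using D ann(5) Qe by (simp only: mult.assoc)
  have P': "real (ann_params G) \<le> 24 * max 1 (2 * L) powr (q / (q - 1)) * \<epsilon> powr (- q / (q - 1))"
    using Pa ann(5,6) Qe by (simp only: mult.assoc)
  show ?thesis
    apply (rule exI[of _ G])
    using ann net cont glip err D' P' by simp
qed

end
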